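(* Let $F$ be a violating edge set and let $(\mathcal{T},\mathcal{M},y)$ be a tree embedding of $(G,\tilde x)$ that is good for $F$. Then $|Z_F|\le 2^{2(p+q)\beta}k$.
   Context: Setting: $G=(V,E)$ is an undirected graph with edges partitioned into safe and unsafe edges; $p,q$ are nonnegative integers with $p+q\ge1$; $(s_i,t_i)$, $i\in[k]$, are terminal pairs; $H\subseteq E$ is such that every pair is $(p,q)$-flex-connected in $H$ (every cut $\delta_H(S)$ separating $s_i$ from $t_i$ has at least $p$ safe edges or at least $p+q$ edges). A violating edge set is $F=\delta_H(S)$ for some $S$ separating some pair with $|\delta_H(S)|=p+q$ and at most $p-1$ safe edges. Let $\beta\ge1$ and let $\tilde x:E\to\mathbb{R}_{>0}$ be capacities with $\tilde x_e=\frac{1}{4(p+q)\beta}$ for every $e\in H$. A tree embedding of $(G,\tilde x)$ is a tree $\mathcal{T}$ with $\mathcal{M}_1:V(\mathcal{T})\to V$ restricting to a bijection between leaves and $V$ (vertices identified with leaves), and $\mathcal{M}_2$ mapping each tree edge $(a,b)$ to a path in $G$ between $\mathcal{M}_1(a),\mathcal{M}_1(b)$; capacities $y(f)=\tilde x(\delta_G(A'))$ with $A'$ the vertex set of leaves in one component of $\mathcal{T}-f$; $\mathcal{M}^{-1}(F)=\{f:\mathcal{M}_2(f)\cap F\neq\emptyset\}$; good for $F$ means $y(\mathcal{M}^{-1}(F))\le\frac12$. $\mathcal{Q}_F$ is the set of components of $(V,H\setminus F)$; $Q_{s_i},Q_{t_i}$ contain $s_i,t_i$; $Q\in\mathcal{Q}_F$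 is shattered if its leaves are not all in one component of $\mathcal{T}-\mathcal{M}^{-1}(F)$; disjoint $A,B\subseteq V$ partition the shattered components if each shattered component lies in $A$ or in $B$; $Z_F=\{(A\cup Q_{s_i},B\cup Q_{t_i}):(A,B)\text{ partitions the shattered components},i\in[k]\}$. *)

theory Defs
  imports Complex_Main
begin

definition cut :: "('e \<Rightarrow> 'v \<times> 'v) \<Rightarrow> 'e set \<Rightarrow> 'v set \<Rightarrow> 'e set" where
  "cut ep X S = {e \<in> X. (fst (ep e) \<in> S) \<noteq> (snd (ep e) \<in> S)}"

definition separates :: "'v set \<Rightarrow> 'v \<Rightarrow> 'v \<Rightarrow> bool" where
  "separates S a b \<longleftrightarrow> (a \<in> S \<and> b \<notin> S) \<or> (b \<in> S \<and> a \<notin> S)"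

definition flex_connected :: "'v set \<Rightarrow> ('e \<Rightarrow> 'v \<times> 'v) \<Rightarrow> 'e set \<Rightarrow> 'e set
    \<Rightarrow> nat \<Rightarrow> nat \<Rightarrow> nat \<Rightarrow> (nat \<Rightarrow> 'v) \<Rightarrow> (nat \<Rightarrow> 'v) \<Rightarrow> bool" where
  "flex_connected V ep safe H p q k s t \<longleftrightarrow>
     (\<forall>i\<in>{1..k}. \<forall>S\<subseteq>V. separates S (s i) (t i) \<longrightarrow>
        card (cut ep H S \<inter> safe) \<ge> p \<or> card (cut ep H S) \<ge> p + q)"

definition violating :: "'v set \<Rightarrow> ('e \<Rightarrow> 'v \<times> 'v) \<Rightarrow> 'e set \<Rightarrow> 'e set
    \<Rightarrow> nat \<Rightarrow> nat \<Rightarrow> nat \<Rightarrow> (nat \<Rightarrow> 'v) \<Rightarrow> (nat \<Rightarrow> 'v) \<Rightarrow> 'e set \<Rightarrow> bool" where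
  "violating V ep safe H p q k s t F \<longleftrightarrow>
     (\<exists>S\<subseteq>V. \<exists>i\<in>{1..k}. separates S (s i) (t i) \<and> F = cut ep H S \<and>
        card (cut ep H S) = p + q \<and> card (cut ep H S \<inter> safe) < p)"

definition greach :: "'v set \<Rightarrow> ('e \<Rightarrow> 'v \<times> 'v) \<Rightarrow> 'e set \<Rightarrow> 'v \<Rightarrow> 'v \<Rightarrow> bool" where
  "greach V ep X = (\<lambda>u w. u \<in> V \<and> w \<in> V \<and> (\<exists>e\<in>X. ep e = (u, w) \<or> ep e = (w, u)))\<^sup>*\<^sup>*"

definition gcomp :: "'v set \<Rightarrow> ('e \<Rightarrow> 'v \<times> 'v) \<Rightarrow> 'e set \<Rightarrow> 'v \<Rightarrow> 'v set" where
  "gcomp V ep X v = {w \<in> V. greach V ep X v w}"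

definition gcomps :: "'v set \<Rightarrow> ('e \<Rightarrow> 'v \<times> 'v) \<Rightarrow> 'e set \<Rightarrow> 'v set set" where
  "gcomps V ep X = gcomp V ep X ` V"

definition gpath :: "'v set \<Rightarrow> 'e set \<Rightarrow> ('e \<Rightarrow> 'v \<times> 'v) \<Rightarrow> 'v \<Rightarrow> 'e list \<Rightarrow> 'v \<Rightarrow> bool" where
  "gpath V E ep u es w \<longleftrightarrow>
     (\<exists>vs. length vs = Suc (length es) \<and> hd vs = u \<and> last vs = w \<and> distinct vs \<and> set vs \<subseteq> V \<and>
        (\<forall>j < length es. es ! j \<in> E \<and>
           (ep (es ! j) = (vs ! j, vs ! Suc j) \<or> ep (es ! j) = (vs ! Suc j, vs ! j))))"

definition tadj :: "'t set \<Rightarrow> 't set set \<Rightarrow> 't \<Rightarrow> 't \<Rightarrow> bool" where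
  "tadj VT D a b \<longleftrightarrow> a \<in> VT \<and> b \<in> VT \<and> a \<noteq> b \<and> {a, b} \<in> D"

definition is_cycle :: "'t set \<Rightarrow> 't set set \<Rightarrow> 't list \<Rightarrow> bool" where
  "is_cycle VT ET cs \<longleftrightarrow> length cs \<ge> 3 \<and> distinct cs \<and>
     (\<forall>j. Suc j < length cs \<longrightarrow> tadj VT ET (cs ! j) (cs ! Suc j)) \<and>
     tadj VT ET (last cs) (hd cs)"

definition is_tree :: "'t set \<Rightarrow> 't set set \<Rightarrow> bool" where
  "is_tree VT ET \<longleftrightarrow> finite VT \<and> VT \<noteq> {} \<and>
     (\<forall>f\<in>ET. \<exists>a b. f = {a, b} \<and> a \<noteq> b \<and> a \<in> VT \<and> b \<in> VT) \<and>
     (\<forall>a\<in>VT. \<forall>b\<in>VT. (tadj VT ET)\<^sup>*\<^sup>* a b) \<and>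
     (\<nexists>cs. is_cycle VT ET cs)"

(* leaves: vertices of degree at most one (degree 0 only for the one-vertex tree) *)
definition tleaves :: "'t set \<Rightarrow> 't set set \<Rightarrow> 't set" where
  "tleaves VT ET = {a \<in> VT. card {f \<in> ET. a \<in> f} \<le> 1}"

definition tcomp :: "'t set \<Rightarrow> 't set set \<Rightarrow> 't \<Rightarrow> 't set" where
  "tcomp VT D a = {b \<in> VT. (tadj VT D)\<^sup>*\<^sup>* a b}"

definition tree_embedding :: "'v set \<Rightarrow> 'e set \<Rightarrow> ('e \<Rightarrow> 'v \<times> 'v)
    \<Rightarrow> 't set \<Rightarrow> 't set set \<Rightarrow> ('t \<Rightarrow> 'v) \<Rightarrow> ('t set \<Rightarrow> 'e list) \<Rightarrow> bool" where
  "tree_embedding V E ep VT ET M1 M2 \<longleftrightarrow>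
     is_tree VT ET \<and> M1 ` VT \<subseteq> V \<and> bij_betw M1 (tleaves VT ET) V \<and>
     (\<forall>f\<in>ET. \<exists>a b. f = {a, b} \<and> gpath V E ep (M1 a) (M2 f) (M1 b))"

(* y(f) = x(delta_G(A')), A' = leaves of one component of T - f (identified with vertices of G) *)
definition tcap :: "'e set \<Rightarrow> ('e \<Rightarrow> 'v \<times> 'v) \<Rightarrow> ('e \<Rightarrow> real)
    \<Rightarrow> 't set \<Rightarrow> 't set set \<Rightarrow> ('t \<Rightarrow> 'v) \<Rightarrow> 't set \<Rightarrow> real" where
  "tcap E ep x VT ET M1 f =
     sum x (cut ep E (M1 ` (tleaves VT ET \<inter> tcomp VT (ET - {f}) (SOME a. a \<in> f))))"

definition Minv :: "'t set set \<Rightarrow> ('t set \<Rightarrow> 'e list) \<Rightarrow> 'e set \<Rightarrow> 't set set" where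
  "Minv ET M2 F = {f \<in> ET. set (M2 f) \<inter> F \<noteq> {}}"

definition good_for :: "'e set \<Rightarrow> ('e \<Rightarrow> 'v \<times> 'v) \<Rightarrow> ('e \<Rightarrow> real)
    \<Rightarrow> 't set \<Rightarrow> 't set set \<Rightarrow> ('t \<Rightarrow> 'v) \<Rightarrow> ('t set \<Rightarrow> 'e list) \<Rightarrow> 'e set \<Rightarrow> bool" where
  "good_for E ep x VT ET M1 M2 F \<longleftrightarrow>
     (\<Sum>f\<in>Minv ET M2 F. tcap E ep x VT ET M1 f) \<le> 1/2"

definition shattered :: "'t set \<Rightarrow> 't set set \<Rightarrow> ('t \<Rightarrow> 'v) \<Rightarrow> ('t set \<Rightarrow> 'e list)
    \<Rightarrow> 'e set \<Rightarrow> 'v set \<Rightarrow> bool" where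
  "shattered VT ET M1 M2 F Q \<longleftrightarrow>
     \<not> (\<exists>a\<in>VT. \<forall>l\<in>tleaves VT ET. M1 l \<in> Q \<longrightarrow> l \<in> tcomp VT (ET - Minv ET M2 F) a)"

definition shattered_comps :: "'v set \<Rightarrow> ('e \<Rightarrow> 'v \<times> 'v) \<Rightarrow> 'e set
    \<Rightarrow> 't set \<Rightarrow> 't set set \<Rightarrow> ('t \<Rightarrow> 'v) \<Rightarrow> ('t set \<Rightarrow> 'e list) \<Rightarrow> 'e set \<Rightarrow> 'v set set" where
  "shattered_comps V ep H VT ET M1 M2 F =
     {Q \<in> gcomps V ep (H - F). shattered VT ET M1 M2 F Q}"

definition partitions_shattered :: "'v set set \<Rightarrow> 'v set \<Rightarrow> 'v set \<Rightarrow> bool" where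
  "partitions_shattered SC A B \<longleftrightarrow>
     A \<inter> B = {} \<and> A \<union> B = \<Union>SC \<and> (\<forall>Q\<in>SC. Q \<subseteq> A \<or> Q \<subseteq> B)"

definition Z_set :: "'v set \<Rightarrow> ('e \<Rightarrow> 'v \<times> 'v) \<Rightarrow> 'e set \<Rightarrow> nat \<Rightarrow> (nat \<Rightarrow> 'v) \<Rightarrow> (nat \<Rightarrow> 'v)
    \<Rightarrow> 't set \<Rightarrow> 't set set \<Rightarrow> ('t \<Rightarrow> 'v) \<Rightarrow> ('t set \<Rightarrow> 'e list) \<Rightarrow> 'e set \<Rightarrow> ('v set \<times> 'v set) set" where
  "Z_set V ep H k s t VT ET M1 M2 F =
     {(A \<union> gcomp V ep (H - F) (s i), B \<union> gcomp V ep (H - F) (t i)) | A B i.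
        partitions_shattered (shattered_comps V ep H VT ET M1 M2 F) A B \<and> i \<in> {1..k}}"

end

theory Submission
  imports Defs "HOL-Library.Transitive_Closure_Table"
begin

lemma rpath_chain:
  "rtrancl_path r x xs y \<Longrightarrow>
   (\<forall>j. Suc j < length (x#xs) \<longrightarrow> r ((x#xs)!j) ((x#xs)!Suc j)) \<and> last (x#xs) = y"
proof (induction rule: rtrancl_path.induct)
  case (base x)
  then show ?case by simp
next
  case (step x y ys z)
  show ?case
  proof (intro conjI allI impI)
    fix j assume "Suc j < length (x # y # ys)"
    then show "r ((x # y # ys) ! j) ((x # y # ys) ! Suc j)"
      using step by (cases j) auto
  next
    show "last (x # y # ys) = z" using step by auto
  qed
qed

lemma tadj_sym: "tadj VT D a b \<Longrightarrow> tadj VT D b a"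
  by (auto simp: tadj_def insert_commute)

lemma rtc_sym: assumes "\<And>a b. r a b \<Longrightarrow> r b a" shows "r\<^sup>*\<^sup>* a b \<Longrightarrow> r\<^sup>*\<^sup>* b a"
  by (induction rule: rtranclp_induct) (auto intro: converse_rtranclp_into_rtranclp assms)

lemma tadj_mono: "D \<subseteq> D' \<Longrightarrow> tadj VT D a b \<Longrightarrow> tadj VT D' a b"
  by (auto simp: tadj_def)

lemma tree_cut:
  assumes tr: "is_tree VT ET" and f: "{a,b} \<in> ET" and ab: "a \<noteq> b"
  shows "\<not> (tadj VT (ET - {{a,b}}))\<^sup>*\<^sup>* a b"
proof
  assume "(tadj VT (ET - {{a,b}}))\<^sup>*\<^sup>* a b"
  then obtain xs where "rtrancl_path (tadj VT (ET - {{a,b}})) a xs b"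
    by (auto simp: rtranclp_eq_rtrancl_path)
  then obtain ys where p: "rtrancl_path (tadj VT (ET - {{a,b}})) a ys b" and d: "distinct (a#ys)"
    by (rule rtrancl_path_distinct)
  from rpath_chain[OF p] have ch: "\<forall>j. Suc j < length (a#ys) \<longrightarrow>
      tadj VT (ET - {{a,b}}) ((a#ys)!j) ((a#ys)!Suc j)" and l: "last (a#ys) = b" by auto
  have "ys \<noteq> []" using l ab by auto
  then obtain y zs where ys: "ys = y # zs" by (cases ys) auto
  have "zs \<noteq> []"
  proof
    assume "zs = []"
    then have "y = b" using l ys by simp
    then have "tadj VT (ET - {{a,b}}) a b" using ch ys \<open>zs = []\<close> by force
    then show False by (auto simp: tadj_def)
  qed
  have abV: "a \<in> VT" "b \<in> VT"
    using tr f unfolding is_tree_def by (metis doubleton_eq_iff)+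
  have "is_cycle VT ET (a#ys)"
    unfolding is_cycle_def
  proof (intro conjI allI impI)
    show "3 \<le> length (a # ys)" using ys \<open>zs \<noteq> []\<close> by (cases zs) auto
    show "distinct (a#ys)" by (rule d)
    fix j assume "Suc j < length (a # ys)"
    then show "tadj VT ET ((a # ys) ! j) ((a # ys) ! Suc j)"
      using ch tadj_mono[of "ET - {{a,b}}" ET] by blast
  next
    show "tadj VT ET (last (a # ys)) (hd (a # ys))"
      using l abV ab f by (auto simp: tadj_def insert_commute)
  qed
  then show False using tr unfolding is_tree_def by blast
qed

lemma path_avoid:
  "rtrancl_path (tadj VT ET) y ys w \<Longrightarrow> u \<notin> set (y#ys) \<Longrightarrow> u \<in> g \<Longrightarrow>
   (tadj VT (ET - {g}))\<^sup>*\<^sup>* y w"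
proof (induction rule: rtrancl_path.induct)
  case (base x)
  then show ?case by simp
next
  case (step x y ys z)
  have "tadj VT (ET - {g}) x y" using step by (auto simp: tadj_def)
  then show ?case using step by (auto intro: converse_rtranclp_into_rtranclp)
qed

lemma path_sep:
  "rtrancl_path (tadj VT ET) u xs w \<Longrightarrow> distinct (u#xs) \<Longrightarrow> D \<subseteq> ET \<Longrightarrow>
   \<not> (tadj VT (ET - D))\<^sup>*\<^sup>* u w \<Longrightarrow>
   \<exists>f\<in>D. \<exists>a b. f = {a,b} \<and> a \<noteq> b \<and> (tadj VT (ET-{f}))\<^sup>*\<^sup>* u a \<and> (tadj VT (ET-{f}))\<^sup>*\<^sup>* w b"
proof (induction rule: rtrancl_path.induct)
  case (base x)
  then show ?case by simp
next
  case (step x y ys z)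
  show ?case
  proof (cases "{x,y} \<in> D")
    case True
    have "(tadj VT (ET - {{x,y}}))\<^sup>*\<^sup>* y z"
      using path_avoid[OF step(2), of x "{x,y}"] step(4) by auto
    then have "(tadj VT (ET - {{x,y}}))\<^sup>*\<^sup>* z y"
      by (rule rtc_sym[rotated]) (rule tadj_sym)
    moreover have "x \<noteq> y" using step(1) by (auto simp: tadj_def)
    ultimately show ?thesis using True by blast
  next
    case False
    have xy: "tadj VT (ET - D) x y" using step(1) False by (auto simp: tadj_def)
    have "\<not> (tadj VT (ET - D))\<^sup>*\<^sup>* y z"
      using xy step(6) by (meson converse_rtranclp_into_rtranclp)
    then obtain f a b where fab: "f\<in>D" "f = {a,b}" "a \<noteq> b" "(tadj VT (ET-{f}))\<^sup>*\<^sup>* y a"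
      "(tadj VT (ET-{f}))\<^sup>*\<^sup>* z b"
      using step by auto
    have "tadj VT (ET - {f}) x y" using step(1) False fab(1) by (auto simp: tadj_def)
    then have "(tadj VT (ET-{f}))\<^sup>*\<^sup>* x a" using fab(4) by (auto intro: converse_rtranclp_into_rtranclp)
    then show ?thesis using fab by blast
  qed
qed

lemma reach_cross:
  "greach V ep X u w \<Longrightarrow> u \<in> S \<Longrightarrow> w \<notin> S \<Longrightarrow>
   \<exists>e\<in>X. ((fst (ep e)) \<in> S) \<noteq> (snd (ep e) \<in> S) \<and> greach V ep X u (fst (ep e)) \<and> greach V ep X u (snd (ep e))"
  unfolding greach_def
proof (induction rule: rtranclp_induct)
  case base
  then show ?case by simp
next
  case (step y z)
  show ?case
  proof (cases "y \<in> S")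
    case True
    from step(2) obtain e where e: "e \<in> X" "ep e = (y, z) \<or> ep e = (z, y)" by auto
    have "(\<lambda>u w. u \<in> V \<and> w \<in> V \<and> (\<exists>e\<in>X. ep e = (u, w) \<or> ep e = (w, u)))\<^sup>*\<^sup>* u z"
      using step(1,2) by (rule rtranclp.rtrancl_into_rtrancl)
    then show ?thesis using e True step by (auto intro!: bexI[of _ e])
  next
    case False
    then show ?thesis using step by auto
  qed
qed

lemma greach_sym: "greach V ep X u w \<Longrightarrow> greach V ep X w u"
  unfolding greach_def by (rule rtc_sym[rotated]) auto

lemma greach_trans: "greach V ep X u w \<Longrightarrow> greach V ep X w z \<Longrightarrow> greach V ep X u z"
  unfolding greach_def by (rule rtranclp_trans)

lemma reach_cross2:
  assumes "greach V ep X u w" "(u \<in> S) \<noteq> (w \<in> S)"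
  shows "\<exists>e\<in>X. ((fst (ep e)) \<in> S) \<noteq> (snd (ep e) \<in> S) \<and> greach V ep X u (fst (ep e)) \<and> greach V ep X u (snd (ep e))"
proof (cases "u \<in> S")
  case True
  then show ?thesis using reach_cross[OF assms(1)] assms(2) by blast
next
  case False
  then show ?thesis using reach_cross[OF assms(1), of "-S"] assms(2) by auto
qed

lemma gcomp_eq: "z \<in> gcomp V ep X v1 \<Longrightarrow> z \<in> gcomp V ep X v2 \<Longrightarrow> gcomp V ep X v1 = gcomp V ep X v2"
  unfolding gcomp_def by (blast intro: greach_sym greach_trans)


theorem lemma4p5:
  fixes V :: "'v set" and E :: "'e set" and ep :: "'e \<Rightarrow> 'v \<times> 'v"
    and safe H F :: "'e set" and p q k :: nat and s t :: "nat \<Rightarrow> 'v"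
    and \<beta> :: real and x :: "'e \<Rightarrow> real"
    and VT :: "'t set" and ET :: "'t set set" and M1 :: "'t \<Rightarrow> 'v" and M2 :: "'t set \<Rightarrow> 'e list"
  assumes "finite V" and "finite E"
    and "\<forall>e\<in>E. fst (ep e) \<in> V \<and> snd (ep e) \<in> V"
    and "safe \<subseteq> E"
    and "p + q \<ge> 1"
    and "\<forall>i\<in>{1..k}. s i \<in> V \<and> t i \<in> V"
    and "H \<subseteq> E"
    and "flex_connected V ep safe H p q k s t"
    and "violating V ep safe H p q k s t F"
    and "\<beta> \<ge> 1"
    and "\<forall>e\<in>E. x e > 0"
    and "\<forall>e\<in>H. x e = 1 / (4 * real (p + q) * \<beta>)"
    and "tree_embedding V E ep VT ET M1 M2"
    and "good_for E ep x VT ET M1 M2 F"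
  shows "real (card (Z_set V ep H k s t VT ET M1 M2 F)) \<le> 2 powr (2 * real (p + q) * \<beta>) * real k"
proof -
  note A = assms
  have tr: "is_tree VT ET" and bij: "bij_betw M1 (tleaves VT ET) V"
    using A(13) unfolding tree_embedding_def by auto
  have trc: "\<forall>a\<in>VT. \<forall>b\<in>VT. (tadj VT ET)\<^sup>*\<^sup>* a b"
    using tr unfolding is_tree_def by blast
  define L where "L = tleaves VT ET"
  have LVT: "L \<subseteq> VT" unfolding L_def tleaves_def by auto
  have injM: "inj_on M1 L" using bij unfolding L_def bij_betw_def by auto
  have imM: "M1 ` L = V" using bij unfolding L_def bij_betw_def by auto
  define SC where "SC = shattered_comps V ep H VT ET M1 M2 F"
  define Mi where "Mi = Minv ET M2 F"
  define A' where "A' f = M1 ` (L \<inter> tcomp VT (ET - {f}) (SOME a. a \<in> f))" for f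
  define c where "c = 1 / (4 * real (p + q) * \<beta>)"
  have MiET: "Mi \<subseteq> ET" unfolding Mi_def Minv_def by auto
  have K: "\<forall>Q\<in>SC. \<exists>fe. fst fe \<in> Mi \<and> snd fe \<in> H \<and> snd fe \<in> cut ep E (A' (fst fe)) \<and>
      fst (ep (snd fe)) \<in> Q \<and> snd (ep (snd fe)) \<in> Q"
  proof
    fix Q assume "Q \<in> SC"
    then have QG: "Q \<in> gcomps V ep (H - F)" and sh: "shattered VT ET M1 M2 F Q"
      unfolding SC_def shattered_comps_def by auto
    then obtain v0 where v0: "v0 \<in> V" "Q = gcomp V ep (H - F) v0"
      unfolding gcomps_def by auto
    obtain l1 where l1: "l1 \<in> L" "M1 l1 = v0" using imM v0(1) by blast
    have l1VT: "l1 \<in> VT" using l1 LVT by auto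
    have "v0 \<in> Q" using v0 unfolding gcomp_def greach_def by auto
    from sh l1VT obtain l2 where l2: "l2 \<in> L" "M1 l2 \<in> Q" "l2 \<notin> tcomp VT (ET - Mi) l1"
      unfolding shattered_def Mi_def L_def by blast
    have l2VT: "l2 \<in> VT" using l2 LVT by auto
    have nc: "\<not> (tadj VT (ET - Mi))\<^sup>*\<^sup>* l1 l2" using l2(3) l2VT unfolding tcomp_def by auto
    have "(tadj VT ET)\<^sup>*\<^sup>* l1 l2" using trc l1VT l2VT by blast
    then obtain xs where "rtrancl_path (tadj VT ET) l1 xs l2"
      by (auto simp: rtranclp_eq_rtrancl_path)
    then obtain ys where p: "rtrancl_path (tadj VT ET) l1 ys l2" and d: "distinct (l1#ys)"
      by (rule rtrancl_path_distinct)
    from path_sep[OF p d MiET nc] obtain f a b where fab: "f \<in> Mi" "f = {a,b}" "a \<noteq> b"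
      "(tadj VT (ET-{f}))\<^sup>*\<^sup>* l1 a" "(tadj VT (ET-{f}))\<^sup>*\<^sup>* l2 b" by blast
    have fET: "f \<in> ET" using fab MiET by auto
    have nab: "\<not> (tadj VT (ET-{f}))\<^sup>*\<^sup>* a b" using tree_cut[OF tr] fET fab by auto
    define cc where "cc = (SOME a. a \<in> f)"
    have "cc \<in> f" unfolding cc_def fab(2) by (rule someI[of _ a]) simp
    then have cc: "cc = a \<or> cc = b" using fab by auto
    have symR: "\<And>u w. (tadj VT (ET-{f}))\<^sup>*\<^sup>* u w \<Longrightarrow> (tadj VT (ET-{f}))\<^sup>*\<^sup>* w u"
      using rtc_sym[of "tadj VT (ET-{f})"] tadj_sym by metis
    have sep: "(l1 \<in> tcomp VT (ET-{f}) cc) \<noteq> (l2 \<in> tcomp VT (ET-{f}) cc)"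
      using cc
    proof
      assume "cc = a"
      moreover have "(tadj VT (ET-{f}))\<^sup>*\<^sup>* a l1" using symR fab(4) .
      moreover have "\<not> (tadj VT (ET-{f}))\<^sup>*\<^sup>* a l2" using nab fab(5) rtranclp_trans by metis
      ultimately show ?thesis using l1VT unfolding tcomp_def by auto
    next
      assume "cc = b"
      moreover have "(tadj VT (ET-{f}))\<^sup>*\<^sup>* b l2" using symR fab(5) .
      moreover have "\<not> (tadj VT (ET-{f}))\<^sup>*\<^sup>* b l1" using nab fab(4) rtranclp_trans symR by metis
      ultimately show ?thesis using l2VT unfolding tcomp_def by auto
    qed
    have mem: "\<And>l. l \<in> L \<Longrightarrow> (M1 l \<in> A' f) = (l \<in> tcomp VT (ET-{f}) cc)"
      unfolding A'_def cc_def[symmetric] using inj_on_image_mem_iff[OF injM] by blast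
    have sep2: "(M1 l1 \<in> A' f) \<noteq> (M1 l2 \<in> A' f)" using sep mem l1(1) l2(1) by auto
    have gr: "greach V ep (H - F) (M1 l1) (M1 l2)"
      using l2(2) l1(2) v0(2) unfolding gcomp_def by auto
    from reach_cross2[OF gr sep2] obtain e where e: "e \<in> H - F"
      "(fst (ep e) \<in> A' f) \<noteq> (snd (ep e) \<in> A' f)"
      "greach V ep (H - F) v0 (fst (ep e))" "greach V ep (H - F) v0 (snd (ep e))"
      using l1(2) by auto
    have eE: "e \<in> E" using e(1) A(7) by auto
    have "fst (ep e) \<in> Q" "snd (ep e) \<in> Q" using e(3,4) eE A(3) v0(2) unfolding gcomp_def by auto
    moreover have "e \<in> cut ep E (A' f)" using e(2) eE unfolding cut_def by auto
    ultimately show "\<exists>fe. fst fe \<in> Mi \<and> snd fe \<in> H \<and> snd fe \<in> cut ep E (A' (fst fe)) \<and>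
      fst (ep (snd fe)) \<in> Q \<and> snd (ep (snd fe)) \<in> Q"
      using fab(1) e(1) by (intro exI[of _ "(f, e)"]) auto
  qed
  from bchoice[OF K] obtain g where g: "\<forall>Q\<in>SC. fst (g Q) \<in> Mi \<and> snd (g Q) \<in> H \<and>
      snd (g Q) \<in> cut ep E (A' (fst (g Q))) \<and> fst (ep (snd (g Q))) \<in> Q \<and> snd (ep (snd (g Q))) \<in> Q"
    by blast
  define fQ where "fQ Q = fst (g Q)" for Q
  define eQ where "eQ Q = snd (g Q)" for Q
  have SCG: "SC \<subseteq> gcomp V ep (H - F) ` V"
    unfolding SC_def shattered_comps_def gcomps_def by auto
  have finSC: "finite SC" using SCG A(1) by (simp add: finite_subset)
  have trE: "\<forall>f\<in>ET. \<exists>a b. f = {a,b} \<and> a \<noteq> b \<and> a \<in> VT \<and> b \<in> VT"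
    using tr unfolding is_tree_def by simp
  have finVT: "finite VT" using tr unfolding is_tree_def by simp
  have ETP: "ET \<subseteq> Pow VT"
  proof
    fix f assume "f \<in> ET"
    then obtain a b where "f = {a,b}" "a \<in> VT" "b \<in> VT" using trE by blast
    then show "f \<in> Pow VT" by simp
  qed
  have finET: "finite ET" using ETP finVT by (simp add: finite_subset)
  have finMi: "finite Mi" using MiET finET finite_subset by blast
  have injE: "inj_on eQ SC"
  proof (rule inj_onI)
    fix Q Q' assume Q: "Q \<in> SC" "Q' \<in> SC" "eQ Q = eQ Q'"
    then have z: "fst (ep (eQ Q)) \<in> Q" "fst (ep (eQ Q)) \<in> Q'" using g unfolding eQ_def by auto
    obtain v1 v2 where "Q = gcomp V ep (H - F) v1" "Q' = gcomp V ep (H - F) v2"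
      using Q SCG by blast
    then show "Q = Q'" using z gcomp_eq by metis
  qed
  have xnn: "\<forall>e\<in>E. 0 \<le> x e" using A(11) by (auto intro: less_imp_le)
  have per: "(\<Sum>Q\<in>{Q \<in> SC. fQ Q = f}. x (eQ Q)) \<le> tcap E ep x VT ET M1 f" if "f \<in> Mi" for f
  proof -
    have "(\<Sum>Q\<in>{Q \<in> SC. fQ Q = f}. x (eQ Q)) = sum x (eQ ` {Q \<in> SC. fQ Q = f})"
      by (rule sum.reindex[symmetric, unfolded comp_def]) (rule inj_on_subset[OF injE], auto)
    also have "\<dots> \<le> sum x (cut ep E (A' f))"
    proof (rule sum_mono2)
      show "finite (cut ep E (A' f))" using A(2) unfolding cut_def by auto
      show "eQ ` {Q \<in> SC. fQ Q = f} \<subseteq> cut ep E (A' f)" using g unfolding eQ_def fQ_def by auto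
      fix b assume "b \<in> cut ep E (A' f) - eQ ` {Q \<in> SC. fQ Q = f}"
      then show "0 \<le> x b" using xnn unfolding cut_def by auto
    qed
    also have "\<dots> = tcap E ep x VT ET M1 f" unfolding tcap_def A'_def L_def by simp
    finally show ?thesis .
  qed
  have "real (card SC) * c = (\<Sum>Q\<in>SC. x (eQ Q))"
    using g A(12) unfolding eQ_def c_def by simp
  also have "\<dots> = (\<Sum>f\<in>Mi. \<Sum>Q\<in>{Q \<in> SC. fQ Q = f}. x (eQ Q))"
    by (rule sum.group[symmetric]) (use finSC finMi g fQ_def in auto)
  also have "\<dots> \<le> (\<Sum>f\<in>Mi. tcap E ep x VT ET M1 f)" by (rule sum_mono) (rule per)
  also have "\<dots> \<le> 1/2" using A(14) unfolding good_for_def Mi_def by simp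
  finally have cs: "real (card SC) * c \<le> 1/2" .
  have pos: "0 < real (p + q) * \<beta>" using A(5) A(10) by simp
  have cardSC: "real (card SC) \<le> 2 * real (p + q) * \<beta>"
    using cs pos unfolding c_def by (simp add: field_simps)
  define P where "P = {(A, B). partitions_shattered SC A B}"
  have Aeq: "A = \<Union>{Q \<in> SC. Q \<subseteq> A}" "B = \<Union>SC - A" if "(A, B) \<in> P" for A B
    using that unfolding P_def partitions_shattered_def by blast+
  have injP: "inj_on (\<lambda>(A, B). {Q \<in> SC. Q \<subseteq> A}) P"
  proof (rule inj_onI)
    fix ab ab' assume h: "ab \<in> P" "ab' \<in> P" "(\<lambda>(A, B). {Q \<in> SC. Q \<subseteq> A}) ab = (\<lambda>(A, B). {Q \<in> SC. Q \<subseteq> A}) ab'"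
    obtain A B A' B' where ab: "ab = (A, B)" "ab' = (A', B')" by (cases ab, cases ab') auto
    have "A = A'" using Aeq(1)[of A B] Aeq(1)[of A' B'] h ab by auto
    moreover then have "B = B'" using Aeq(2)[of A B] Aeq(2)[of A' B'] h ab by auto
    ultimately show "ab = ab'" using ab by simp
  qed
  have cardP: "card P \<le> 2 ^ card SC"
  proof -
    have "card P \<le> card (Pow SC)"
      by (rule card_inj_on_le[OF injP]) (use finSC in auto)
    then show ?thesis using finSC by (simp add: card_Pow)
  qed
  have UV: "\<Union>SC \<subseteq> V" using SCG unfolding gcomp_def by auto
  have finP: "finite P"
  proof (rule finite_subset)
    show "P \<subseteq> Pow V \<times> Pow V" using UV unfolding P_def partitions_shattered_def by blast
    show "finite (Pow V \<times> Pow V)" using A(1) by auto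
  qed
  define h where "h = (\<lambda>((A, B), i). (A \<union> gcomp V ep (H - F) (s i), B \<union> gcomp V ep (H - F) (t i)))"
  have Zsub: "Z_set V ep H k s t VT ET M1 M2 F \<subseteq> h ` (P \<times> {1..k})"
  proof
    fix z assume "z \<in> Z_set V ep H k s t VT ET M1 M2 F"
    then obtain A B i where z: "z = (A \<union> gcomp V ep (H - F) (s i), B \<union> gcomp V ep (H - F) (t i))"
      "partitions_shattered SC A B" "i \<in> {1..k}"
      unfolding Z_set_def SC_def by blast
    show "z \<in> h ` (P \<times> {1..k})"
      by (rule image_eqI[of _ _ "((A, B), i)"]) (use z in \<open>auto simp: h_def P_def\<close>)
  qed
  have "card (Z_set V ep H k s t VT ET M1 M2 F) \<le> card (h ` (P \<times> {1..k}))"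
    by (rule card_mono[OF _ Zsub]) (use finP in auto)
  also have "\<dots> \<le> card (P \<times> {1..k})" by (rule card_image_le) (use finP in auto)
  also have "\<dots> = card P * k" by (simp add: card_cartesian_product)
  also have "\<dots> \<le> 2 ^ card SC * k" using cardP by simp
  finally have "real (card (Z_set V ep H k s t VT ET M1 M2 F)) \<le> real (2 ^ card SC * k)"
    by (rule of_nat_mono)
  also have "\<dots> = 2 ^ card SC * real k" by simp
  also have "\<dots> = 2 powr real (card SC) * real k" by (simp add: powr_realpow)
  also have "\<dots> \<le> 2 powr (2 * real (p + q) * \<beta>) * real k"
    by (rule mult_right_mono) (use cardSC in auto)
  finally show ?thesis .
qed

end
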